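(* Let $\Theta\subseteq\mathbb{R}^p$ be convex, and let $f:\mathbb{R}^p\to\mathbb{R}$ be continuous, convex and bounded below, with a minimizer $\theta^\star$ on $\Theta$; set $f^\star\triangleq f(\theta^\star)$. Let $\theta_0\in\Theta$ and consider the sequence generated by: for $n\ge1$, choose $g_n\in\mathcal{S}_{L,\rho}(f,\theta_{n-1})$ with $\rho\ge L$ and set $\theta_n\in\operatorname{arg\,min}_{\theta\in\Theta}g_n(\theta)$. Then for all $n\ge1$, $$f(\theta_n)-f^\star\le\frac{L\|\theta_0-\theta^\star\|_2^2}{2n}.$$ If moreover $f$ is $\mu$-strongly convex, then for all $n\ge1$, $$\|\theta_n-\theta^\star\|_2^2\le\Big(\frac{L}{\rho+\mu}\Big)^n\|\theta_0-\theta^\star\|_2^2,\qquad f(\theta_n)-f^\star\le\Big(\frac{L}{\rho+\mu}\Big)^{n-1}\frac{L\|\theta_0-\theta^\star\|_2^2}{2}.$$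
   Context: First-order surrogates: given convex $\Theta\subseteq\mathbb{R}^p$, $g:\mathbb{R}^p\to\mathbb{R}$ belongs to $\mathcal{S}_L(f,\kappa)$ if (a) $g(\theta')\ge f(\theta')$ for all $\theta'\in\operatorname{arg\,min}_{\theta\in\Theta}g(\theta)$, and (b) $h\triangleq g-f$ is differentiable on $\mathbb{R}^p$ with $L$-Lipschitz gradient, $h(\kappa)=0$ and $\nabla h(\kappa)=0$. $\mathcal{S}_{L,\rho}(f,\kappa)$ is the subset of $\rho$-strongly convex elements of $\mathcal{S}_L(f,\kappa)$. The minimizers $\theta_n$ are assumed to exist. *)

theory Defs
  imports "HOL-Analysis.Analysis"
begin

definition argmin_on :: "'a set \<Rightarrow> ('a \<Rightarrow> real) \<Rightarrow> 'a set" where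
  "argmin_on Theta g = {x \<in> Theta. \<forall>y \<in> Theta. g x \<le> g y}"

definition strongly_convex :: "real \<Rightarrow> ('a::real_normed_vector \<Rightarrow> real) \<Rightarrow> bool" where
  "strongly_convex mu f \<longleftrightarrow>
     (\<forall>x y. \<forall>t::real. 0 \<le> t \<and> t \<le> 1 \<longrightarrow>
        f (t *\<^sub>R x + (1 - t) *\<^sub>R y)
          \<le> t * f x + (1 - t) * f y - mu / 2 * t * (1 - t) * (norm (x - y))\<^sup>2)"

definition first_order_surrogate ::
  "'a::euclidean_space set \<Rightarrow> real \<Rightarrow> ('a \<Rightarrow> real) \<Rightarrow> 'a \<Rightarrow> ('a \<Rightarrow> real) \<Rightarrow> bool" where
  "first_order_surrogate Theta L f kappa g \<longleftrightarrow>
     (\<forall>x \<in> argmin_on Theta g. f x \<le> g x) \<and>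
     (\<exists>gradh :: 'a \<Rightarrow> 'a.
        (\<forall>x. ((\<lambda>y. g y - f y) has_derivative (\<lambda>v. gradh x \<bullet> v)) (at x)) \<and>
        L-lipschitz_on UNIV gradh \<and>
        g kappa - f kappa = 0 \<and> gradh kappa = 0)"

definition sc_surrogate ::
  "'a::euclidean_space set \<Rightarrow> real \<Rightarrow> real \<Rightarrow> ('a \<Rightarrow> real) \<Rightarrow> 'a \<Rightarrow> ('a \<Rightarrow> real) \<Rightarrow> bool" where
  "sc_surrogate Theta L rho f kappa g \<longleftrightarrow>
     first_order_surrogate Theta L f kappa g \<and> strongly_convex rho g"

end

theory Submission imports Defs begin

lemma sc_min:
  fixes g :: "'a::euclidean_space \<Rightarrow> real"
  assumes sc: "strongly_convex rho g" and rho: "rho \<ge> 0" and cv: "convex Theta"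
    and xm: "x \<in> argmin_on Theta g" and y: "y \<in> Theta"
  shows "g x + rho / 2 * (norm (y - x))\<^sup>2 \<le> g y"
proof -
  have x: "x \<in> Theta" and xmin: "\<And>z. z \<in> Theta \<Longrightarrow> g x \<le> g z"
    using xm by (auto simp: argmin_on_def)
  define a where "a = g y - g x"
  define b where "b = rho / 2 * (norm (y - x))\<^sup>2"
  have b0: "b \<ge> 0" using rho by (simp add: b_def)
  have key: "b * (1 - t) \<le> a" if t: "0 < t" "t \<le> 1" for t
  proof -
    have "t *\<^sub>R y + (1 - t) *\<^sub>R x \<in> Theta"
      using cv x y t by (simp add: convex_def)
    then have "g x \<le> g (t *\<^sub>R y + (1 - t) *\<^sub>R x)" by (rule xmin)
    also have "\<dots> \<le> t * g y + (1 - t) * g x - rho / 2 * t * (1 - t) * (norm (y - x))\<^sup>2"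
      using sc t unfolding strongly_convex_def by auto
    finally have "t * (b * (1 - t)) \<le> t * a"
      by (simp add: a_def b_def algebra_simps)
    then show ?thesis using t by simp
  qed
  have a0: "a \<ge> 0" using key[of 1] by simp
  have "b \<le> a"
  proof (rule ccontr)
    assume "\<not> b \<le> a"
    then have ab: "a < b" by simp
    then have bp: "b > 0" using a0 by simp
    define t where "t = (b - a) / (2 * b)"
    have t0: "0 < t" using ab bp by (simp add: t_def)
    have t1: "t \<le> 1" using ab bp a0 by (simp add: t_def field_simps)
    have "b * (1 - t) = (a + b) / 2" using bp by (simp add: t_def field_simps)
    with key[OF t0 t1] ab show False by simp
  qed
  then show ?thesis by (simp add: a_def b_def)
qed

lemma h_bound:
  fixes H :: "'a::euclidean_space \<Rightarrow> real"
  assumes der: "\<And>x. (H has_derivative (\<lambda>v. gradh x \<bullet> v)) (at x)"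
    and lip: "L-lipschitz_on UNIV gradh"
    and h0: "H k = 0" and g0: "gradh k = 0"
  shows "H th \<le> L / 2 * (norm (th - k))\<^sup>2"
proof -
  define d where "d = th - k"
  define phi where "phi t = H (k + t *\<^sub>R d) - L / 2 * t\<^sup>2 * (norm d)\<^sup>2" for t :: real
  have "phi 1 \<le> phi 0"
  proof (rule DERIV_nonpos_imp_nonincreasing[of 0 1])
    fix t :: real assume t: "0 \<le> t" "t \<le> 1"
    have d1: "((\<lambda>t. k + t *\<^sub>R d) has_derivative (\<lambda>s. s *\<^sub>R d)) (at t)"
      by (auto intro!: derivative_eq_intros)
    have d2: "((\<lambda>t. H (k + t *\<^sub>R d)) has_derivative (\<lambda>s. gradh (k + t *\<^sub>R d) \<bullet> (s *\<^sub>R d))) (at t)"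
      using has_derivative_compose[OF d1 der] by simp
    have d3: "((\<lambda>t. H (k + t *\<^sub>R d)) has_real_derivative (gradh (k + t *\<^sub>R d) \<bullet> d)) (at t)"
    proof -
      have e: "(\<lambda>s. s * (gradh (k + t *\<^sub>R d) \<bullet> d)) = (*) (gradh (k + t *\<^sub>R d) \<bullet> d)"
        by (rule ext) (simp add: mult.commute)
      show ?thesis using d2 unfolding has_field_derivative_def by (simp add: e)
    qed
    have "(phi has_real_derivative (gradh (k + t *\<^sub>R d) \<bullet> d - L / 2 * (2 * t) * (norm d)\<^sup>2)) (at t)"
      unfolding phi_def
      by (rule derivative_eq_intros d3 | simp)+
    moreover have "gradh (k + t *\<^sub>R d) \<bullet> d - L / 2 * (2 * t) * (norm d)\<^sup>2 \<le> 0"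
    proof -
      have "gradh (k + t *\<^sub>R d) \<bullet> d = (gradh (k + t *\<^sub>R d) - gradh k) \<bullet> d"
        using g0 by simp
      also have "\<dots> \<le> norm (gradh (k + t *\<^sub>R d) - gradh k) * norm d"
        by (rule norm_cauchy_schwarz)
      also have "\<dots> \<le> (L * dist (k + t *\<^sub>R d) k) * norm d"
        using lipschitz_onD[OF lip, of "k + t *\<^sub>R d" k]
        by (intro mult_right_mono) (auto simp: dist_norm)
      also have "\<dots> = L * t * (norm d)\<^sup>2"
        using t by (simp add: dist_norm power2_eq_square)
      finally show ?thesis by simp
    qed
    ultimately show "\<exists>y. (phi has_real_derivative y) (at t) \<and> y \<le> 0" by blast
  qed simp
  then show ?thesis using h0 by (simp add: phi_def d_def)
qed

theorem proposition2p3: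
  fixes Theta :: "'a::euclidean_space set"
    and f :: "'a \<Rightarrow> real"
    and theta :: "nat \<Rightarrow> 'a"
    and g :: "nat \<Rightarrow> 'a \<Rightarrow> real"
    and thstar :: 'a
    and L rho :: real
  assumes "convex Theta"
    and "continuous_on UNIV f"
    and "convex_on UNIV f"
    and "bdd_below (range f)"
    and "thstar \<in> argmin_on Theta f"
    and "theta 0 \<in> Theta"
    and "rho \<ge> L"
    and "\<And>n. n \<ge> 1 \<Longrightarrow> sc_surrogate Theta L rho f (theta (n - 1)) (g n)"
    and "\<And>n. n \<ge> 1 \<Longrightarrow> theta n \<in> argmin_on Theta (g n)"
  shows "(\<forall>n\<ge>1. f (theta n) - f thstar \<le> L * (norm (theta 0 - thstar))\<^sup>2 / (2 * real n))
    \<and> (\<forall>mu>0. strongly_convex mu f \<longrightarrow>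
         (\<forall>n\<ge>1. (norm (theta n - thstar))\<^sup>2 \<le> (L / (rho + mu)) ^ n * (norm (theta 0 - thstar))\<^sup>2
                \<and> f (theta n) - f thstar
                    \<le> (L / (rho + mu)) ^ (n - 1) * (L * (norm (theta 0 - thstar))\<^sup>2 / 2)))"
proof -
  note A = assms
  have Lnn: "0 \<le> L"
    using A(8)[of 1] unfolding sc_surrogate_def first_order_surrogate_def
    by (auto dest: lipschitz_on_nonneg)
  have rho0: "0 \<le> rho" using Lnn A(7) by simp
  have mem: "theta n \<in> Theta" for n
    using A(6) A(9)[of n] by (cases n) (auto simp: argmin_on_def)
  have ts: "thstar \<in> Theta" and tsmin: "\<And>z. z \<in> Theta \<Longrightarrow> f thstar \<le> f z"
    using A(5) by (auto simp: argmin_on_def)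
  have key: "f (theta n) + rho / 2 * (norm (y - theta n))\<^sup>2
      \<le> f y + L / 2 * (norm (y - theta (n - 1)))\<^sup>2" if n: "n \<ge> 1" and y: "y \<in> Theta" for n y
  proof -
    have sc: "strongly_convex rho (g n)" and fo: "first_order_surrogate Theta L f (theta (n - 1)) (g n)"
      using A(8)[OF n] by (auto simp: sc_surrogate_def)
    have am: "theta n \<in> argmin_on Theta (g n)" using A(9)[OF n] .
    have "f (theta n) \<le> g n (theta n)" using fo am by (auto simp: first_order_surrogate_def)
    moreover have "g n (theta n) + rho / 2 * (norm (y - theta n))\<^sup>2 \<le> g n y"
      by (rule sc_min[OF sc rho0 A(1) am y])
    moreover have "g n y - f y \<le> L / 2 * (norm (y - theta (n - 1)))\<^sup>2"
    proof -
      obtain gradh where "\<And>x. ((\<lambda>y. g n y - f y) has_derivative (\<lambda>v. gradh x \<bullet> v)) (at x)"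
        "L-lipschitz_on UNIV gradh" "g n (theta (n - 1)) - f (theta (n - 1)) = 0"
        "gradh (theta (n - 1)) = 0"
        using fo unfolding first_order_surrogate_def by blast
      from h_bound[of "\<lambda>y. g n y - f y", OF this] show ?thesis by simp
    qed
    ultimately show ?thesis by linarith
  qed
  define D where "D k = (norm (theta k - thstar))\<^sup>2" for k
  have D0: "D k \<ge> 0" for k by (simp add: D_def)
  have step: "f (theta n) - f thstar + rho / 2 * D n \<le> L / 2 * D (n - 1)" if "n \<ge> 1" for n
    using key[OF that ts] by (simp add: D_def norm_minus_commute)
  have step2: "f (theta n) - f thstar \<le> L / 2 * (D (n - 1) - D n)" if "n \<ge> 1" for n
  proof -
    have "L / 2 * D n \<le> rho / 2 * D n" using A(7) D0[of n] by (intro mult_right_mono) auto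
    with step[OF that] show ?thesis by (simp add: algebra_simps)
  qed
  have dec: "f (theta (Suc n)) \<le> f (theta n)" for n
  proof -
    have "f (theta (Suc n)) + rho / 2 * (norm (theta n - theta (Suc n)))\<^sup>2 \<le> f (theta n)"
      using key[of "Suc n" "theta n"] mem[of n] by simp
    moreover have "0 \<le> rho / 2 * (norm (theta n - theta (Suc n)))\<^sup>2" using rho0 by simp
    ultimately show ?thesis by linarith
  qed
  have sumb: "(\<Sum>k\<in>{1..n}. f (theta k) - f thstar) \<le> L / 2 * (D 0 - D n)" for n
  proof (induction n)
    case 0 then show ?case by simp
  next
    case (Suc n)
    have "(\<Sum>k\<in>{1..Suc n}. f (theta k) - f thstar)
        = (\<Sum>k\<in>{1..n}. f (theta k) - f thstar) + (f (theta (Suc n)) - f thstar)"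
      by simp
    also have "\<dots> \<le> L / 2 * (D 0 - D n) + L / 2 * (D n - D (Suc n))"
      using Suc.IH step2[of "Suc n"] by simp
    also have "\<dots> = L / 2 * (D 0 - D (Suc n))" by (simp add: field_simps)
    finally show ?case .
  qed
  have part1: "f (theta n) - f thstar \<le> L * (norm (theta 0 - thstar))\<^sup>2 / (2 * real n)"
    if n: "n \<ge> 1" for n
  proof -
    have "(\<Sum>k\<in>{1..n}. f (theta n) - f thstar) \<le> (\<Sum>k\<in>{1..n}. f (theta k) - f thstar)"
      by (intro sum_mono) (auto intro: lift_Suc_antimono_le[of "\<lambda>k. f (theta k)", OF dec])
    also have "\<dots> \<le> L / 2 * D 0"
    proof -
      have "L / 2 * (D 0 - D n) \<le> L / 2 * D 0" using Lnn D0[of n] by (intro mult_left_mono) auto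
      with sumb[of n] show ?thesis by linarith
    qed
    finally have "real n * (f (theta n) - f thstar) \<le> L / 2 * D 0" by simp
    then show ?thesis using n by (simp add: D_def field_simps)
  qed
  have part2: "(norm (theta n - thstar))\<^sup>2 \<le> (L / (rho + mu)) ^ n * (norm (theta 0 - thstar))\<^sup>2
                \<and> f (theta n) - f thstar
                    \<le> (L / (rho + mu)) ^ (n - 1) * (L * (norm (theta 0 - thstar))\<^sup>2 / 2)"
    if mu: "mu > 0" and scf: "strongly_convex mu f" and n: "n \<ge> 1" for mu n
  proof -
    define q where "q = L / (rho + mu)"
    have rm: "rho + mu > 0" using rho0 mu by simp
    have q0: "q \<ge> 0" using Lnn rm by (simp add: q_def)
    have fl: "f thstar + mu / 2 * D k \<le> f (theta k)" for k
      using sc_min[OF scf _ A(1) A(5) mem[of k]] mu by (simp add: D_def)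
    have Dstep: "D k \<le> q * D (k - 1)" if "k \<ge> 1" for k
    proof -
      have "(rho + mu) / 2 * D k \<le> L / 2 * D (k - 1)"
        using step[OF that] fl[of k] by (simp add: algebra_simps)
      then have "(rho + mu) * D k \<le> L * D (k - 1)" by simp
      then show ?thesis using rm by (simp add: q_def field_simps)
    qed
    have Dq: "D k \<le> q ^ k * D 0" for k
    proof (induction k)
      case 0 then show ?case by simp
    next
      case (Suc k)
      have "D (Suc k) \<le> q * D k" using Dstep[of "Suc k"] by simp
      also have "\<dots> \<le> q * (q ^ k * D 0)" using Suc.IH q0 by (rule mult_left_mono)
      finally show ?case by simp
    qed
    have "f (theta n) - f thstar \<le> L / 2 * D (n - 1)"
    proof -
      have "0 \<le> rho / 2 * D n" using rho0 D0[of n] by simp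
      with step[OF n] show ?thesis by linarith
    qed
    also have "\<dots> \<le> L / 2 * (q ^ (n - 1) * D 0)"
      using Dq[of "n - 1"] Lnn by (intro mult_left_mono) auto
    also have "\<dots> = q ^ (n - 1) * (L * D 0 / 2)" by simp
    finally show ?thesis using Dq[of n] unfolding q_def D_def by simp
  qed
  show ?thesis using part1 part2 by blast
qed

end
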